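(* Let $(L,\sqsubseteq)$ be a countably complete lattice, $F:L\to L$ monotone and $\omega$-cocontinuous, and $a\in L^\omega$ with $a_{n+1}\sqsubseteq a_n$ for all $n$. Define $c_m=\inf_{n\ge m}\sup_{k\ge n}F^k(a_k)$. Then $c_m\sqsubseteq F(c_m)$ for all $m\in\omega$. In particular, for every $\ell\in L$, $\inf_{n\in\omega}\sup_{k\ge n}F^k(\ell)$ is a postfixed point of $F$.
   Context: A countably complete lattice is a lattice in which every countable subset (including $\emptyset$) has a supremum and an infimum. $F$ is $\omega$-cocontinuous if $F(\inf_n c_n)=\inf_n F(c_n)$ for every descending chain $(c_n)$. $F^k$ is the $k$-fold iterate; a postfixed point is an $x$ with $x\sqsubseteq F(x)$. *)

theory Defs
  imports Main "HOL-Library.Countable_Complete_Lattices"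
begin

definition omega_cocontinuous :: "('a::countable_complete_lattice \<Rightarrow> 'a) \<Rightarrow> bool" where
  "omega_cocontinuous F \<longleftrightarrow>
     (\<forall>c :: nat \<Rightarrow> 'a. (\<forall>n. c (Suc n) \<le> c n) \<longrightarrow> F (INF n. c n) = (INF n. F (c n)))"

end

theory Submission
  imports Defs
begin

lemma main_part:
  fixes F :: "'a::countable_complete_lattice \<Rightarrow> 'a" and a :: "nat \<Rightarrow> 'a"
  assumes mF: "mono F"
    and cc: "omega_cocontinuous F"
    and da: "\<forall>n. a (Suc n) \<le> a n"
  shows "(INF n\<in>{m..}. SUP k\<in>{n..}. (F ^^ k) (a k))
                \<le> F (INF n\<in>{m..}. SUP k\<in>{n..}. (F ^^ k) (a k))"
proof -
  define s where "s n = (SUP k\<in>{n..}. (F ^^ k) (a k))" for n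
  have sdec: "s (Suc n) \<le> s n" for n
    unfolding s_def by (rule ccSUP_subset_mono) auto
  define c where "c = (INF n\<in>{m..}. s n)"
  have img: "s ` {m..} = (\<lambda>n. s (m+n)) ` UNIV"
  proof (intro equalityI subsetI)
    fix x assume "x \<in> s ` {m..}"
    then obtain n where n: "n \<ge> m" "x = s n" by auto
    then have "x = s (m + (n - m))" by simp
    then show "x \<in> (\<lambda>n. s (m+n)) ` UNIV" by blast
  qed auto
  have c2: "c = (INF n. s (m+n))" unfolding c_def by (metis img)
  have Fc: "F c = (INF n. F (s (m+n)))"
    using cc sdec unfolding c2 omega_cocontinuous_def by auto
  have pow: "(F ^^ Suc k) (a (Suc k)) \<le> F ((F ^^ k) (a k))" for k
  proof -
    have "(F ^^ k) (a (Suc k)) \<le> (F ^^ k) (a k)"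
      using funpow_mono[OF mF] da by (metis monoD)
    then have "F ((F ^^ k) (a (Suc k))) \<le> F ((F ^^ k) (a k))" using mF by (rule monoD[rotated])
    then show ?thesis by simp
  qed
  have key: "s (Suc n) \<le> F (s n)" for n
    unfolding s_def
  proof (rule ccSUP_least)
    fix i assume i: "i \<in> {Suc n..}"
    then obtain k where k: "i = Suc k" "k \<ge> n" by (cases i) auto
    have "(F ^^ k) (a k) \<le> (SUP k\<in>{n..}. (F ^^ k) (a k))"
      using k by (intro ccSUP_upper) auto
    then have "F ((F ^^ k) (a k)) \<le> F (SUP k\<in>{n..}. (F ^^ k) (a k))"
      using mF by (rule monoD[rotated])
    then show "(F ^^ i) (a i) \<le> F (SUP k\<in>{n..}. (F ^^ k) (a k))"
      using pow[of k] k by auto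
  qed simp
  have "c \<le> F c"
    unfolding Fc
  proof (rule ccINF_greatest)
    fix n :: nat
    have "c \<le> s (m + Suc n)" unfolding c_def by (intro ccINF_lower) auto
    also have "\<dots> \<le> F (s (m+n))" using key[of "m+n"] by simp
    finally show "c \<le> F (s (m+n))" .
  qed simp
  then show ?thesis unfolding c_def s_def .
qed

theorem mainTheorem7:
  fixes F :: "'a::countable_complete_lattice \<Rightarrow> 'a" and a :: "nat \<Rightarrow> 'a"
  assumes "mono F"
    and "omega_cocontinuous F"
    and "\<forall>n. a (Suc n) \<le> a n"
  shows "(\<forall>m. (INF n\<in>{m..}. SUP k\<in>{n..}. (F ^^ k) (a k))
                \<le> F (INF n\<in>{m..}. SUP k\<in>{n..}. (F ^^ k) (a k)))
       \<and> (\<forall>l. (INF n. SUP k\<in>{n..}. (F ^^ k) l) \<le> F (INF n. SUP k\<in>{n..}. (F ^^ k) l))"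
proof (intro conjI allI)
  fix m show "(INF n\<in>{m..}. SUP k\<in>{n..}. (F ^^ k) (a k))
                \<le> F (INF n\<in>{m..}. SUP k\<in>{n..}. (F ^^ k) (a k))"
    by (rule main_part[OF assms])
next
  fix l
  have "(INF n\<in>{0..}. SUP k\<in>{n..}. (F ^^ k) ((\<lambda>_. l) k))
                \<le> F (INF n\<in>{0..}. SUP k\<in>{n..}. (F ^^ k) ((\<lambda>_. l) k))"
    by (rule main_part[OF assms(1,2)]) simp
  moreover have "{0::nat..} = UNIV" by auto
  ultimately show "(INF n. SUP k\<in>{n..}. (F ^^ k) l) \<le> F (INF n. SUP k\<in>{n..}. (F ^^ k) l)"
    by simp
qed

end
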